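(* Let $p\geq 2$ and let $h\in C^2(\mathbb{R}^n)$ be nonnegative, positively homogeneous of degree $p$, with $\lambda|v|^2\leq\langle D^2h(x)v,v\rangle\leq\Lambda|v|^2$ for all $x\in S^{n-1}$, $v\in\mathbb{R}^n$, for some constants $0<\lambda\le\Lambda$. Let $T$ be $h$-monotone, $x_0\in\mathbb{R}^n$, and suppose $T\in L^{p-1}(B_\epsilon(x_0))$ for some $\epsilon>0$ and there exist a matrix $A=A_{x_0}\in\mathbb{R}^{n\times n}$ and a vector $b=b_{x_0}\in\mathbb{R}^n$ such that $$\left(\fint_{B_R(x_0)}|Tx-Ax-b|^{p-1}dx\right)^{1/(p-1)}=o(R)\quad\text{as }R\to 0,$$ i.e. $T\in t^{1,p-1}(x_0)$. Then $T$ is differentiable in the ordinary sense at $x_0$.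
   Context: A multivalued map $T:\mathbb{R}^n\to\mathcal P(\mathbb{R}^n)$ is $h$-monotone if $h(x-\xi)+h(y-\zeta)\leq h(x-\zeta)+h(y-\xi)$ for all $x,y$ with $T(x),T(y)\neq\emptyset$ and all $\xi\in T(x)$, $\zeta\in T(y)$; such maps are single-valued a.e. and are regarded as a.e. defined functions $\mathbb{R}^n\to\mathbb{R}^n$. For $1\le q\le\infty$, real $k\geq -n/q$, $f\in L^q$ near $x_0$: $f\in t^{k,q}(x_0)$ means there is a polynomial $P_{x_0}$ of degree $\le k$ (of degree strictly less than $k$ for the class $T^{k,q}(x_0)$; $P_{x_0}\equiv0$ if $k\le0$) with $\left(\fint_{B_r(x_0)}|f-P_{x_0}|^q\right)^{1/q}=o(r^k)$ (respectively $O(r^k)$ for $T^{k,q}(x_0)$) as $r\to0$, with the essential sup over $B_r(x_0)$ when $q=\infty$; vector-valued maps belong to a class if each component does. *)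

theory Defs
  imports "HOL-Analysis.Analysis" "HOL-Library.Landau_Symbols"
begin

definition h_monotone :: "('a::real_vector \<Rightarrow> real) \<Rightarrow> ('a \<Rightarrow> 'a set) \<Rightarrow> bool" where
  "h_monotone h T \<longleftrightarrow>
     (\<forall>x y \<xi> \<zeta>. \<xi> \<in> T x \<longrightarrow> \<zeta> \<in> T y \<longrightarrow>
        h (x - \<xi>) + h (y - \<zeta>) \<le> h (x - \<zeta>) + h (y - \<xi>))"

text \<open>Ordinary differentiability at x0 of a multivalued map: there is an affine map
  x \<mapsto> A x + b such that every value \<xi> \<in> T x satisfies
  |\<xi> - A x - b| = o(|x - x0|) as x \<rightarrow> x0 (in particular T x0 \<subseteq> {A x0 + b}).\<close>
definition mv_differentiable_at ::
  "(real^'n \<Rightarrow> (real^'n) set) \<Rightarrow> real^'n \<Rightarrow> bool" where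
  "mv_differentiable_at T x0 \<longleftrightarrow>
     (\<exists>(A::real^'n^'n) b. \<forall>e>0. \<exists>\<delta>>0. \<forall>x \<xi>. dist x x0 < \<delta> \<longrightarrow> \<xi> \<in> T x \<longrightarrow>
        norm (\<xi> - (A *v x + b)) \<le> e * dist x x0)"

end

theory Submission
  imports Defs
begin

lemma mat_vec_norm_le:
  fixes M :: "real^'n^'m"
  shows "norm (M *v x) \<le> real CARD('m) * real CARD('n) * norm M * norm x"
proof -
  have c: "\<And>i j. \<bar>M $ i $ j\<bar> \<le> norm M" by (rule order_trans[OF component_le_norm_cart Finite_Cartesian_Product.norm_nth_le])
  have "onorm ((*v) M) \<le> real (CARD('m)) * real (CARD('n)) * norm M"
    by (rule onorm_le_matrix_component[OF c])
  moreover have "norm (M *v x) \<le> onorm ((*v) M) * norm x"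
    by (rule onorm) simp
  ultimately show ?thesis
    by (meson mult_right_mono norm_ge_zero order_trans)
qed

lemma bl_matvec: "bounded_linear (\<lambda>M::real^'n^'m. M *v E)"
proof (rule bounded_linear_intro[where K="real CARD('m) * real CARD('n) * norm E"])
  show "\<And>M N. (M + N) *v E = M *v E + N *v E"
    by (simp add: matrix_vector_mult_add_rdistrib)
  show "\<And>r M. (r *\<^sub>R M) *v E = r *\<^sub>R (M *v E)"
    by (simp add: scaleR_matrix_vector_assoc)
  fix M :: "real^'n^'m"
  show "norm (M *v E) \<le> norm M * (real CARD('m) * real CARD('n) * norm E)"
    using mat_vec_norm_le[of M E] by (simp add: mult_ac)
qed

lemma cont_extend_0:
  fixes g :: "real^'n \<Rightarrow> real"
  assumes "continuous_on UNIV g" "r > 0" "\<And>v. v \<noteq> 0 \<Longrightarrow> norm v < r \<Longrightarrow> c \<le> g v"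
  shows "c \<le> g 0"
proof -
  define e :: "real^'n" where "e = axis undefined 1"
  have e: "e \<noteq> 0" by (simp add: e_def)
  have "((\<lambda>s. s *\<^sub>R e) \<longlongrightarrow> 0) (at_right (0::real))"
    by (intro tendsto_eq_intros) auto
  then have "((\<lambda>s. g (s *\<^sub>R e)) \<longlongrightarrow> g 0) (at_right (0::real))"
    using assms(1) by (metis UNIV_I continuous_on_def tendsto_at_iff_tendsto_nhds tendsto_compose)
  moreover have "eventually (\<lambda>s. c \<le> g (s *\<^sub>R e)) (at_right (0::real))"
  proof -
    have "eventually (\<lambda>s. s < r / norm e) (at_right (0::real))"
      using e assms(2) by (subst eventually_at_right_field) (auto intro!: exI[of _ "r / norm e"])
    then show ?thesis
    using eventually_at_right_less[of "0::real"]
    by eventually_elim (use e assms(3) in \<open>auto simp: field_simps\<close>)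
  qed
  ultimately show ?thesis
    by (intro tendsto_lowerbound) auto
qed

locale hsetup =
  fixes p lam :: real and h :: "real^'n \<Rightarrow> real" and Dh :: "real^'n \<Rightarrow> real^'n"
    and D2h :: "real^'n \<Rightarrow> real^'n^'n"
  assumes p: "p \<ge> 2"
    and h_grad: "\<And>x. (h has_derivative (\<lambda>v. Dh x \<bullet> v)) (at x)"
    and h_hess: "\<And>x. (Dh has_derivative (\<lambda>v. D2h x *v v)) (at x)"
    and h_C2: "continuous_on UNIV D2h"
    and h_hom: "\<And>t x. t > 0 \<Longrightarrow> h (t *\<^sub>R x) = t powr p * h x"
    and lam: "0 < lam"
    and hess_lo: "\<And>x v. norm x = 1 \<Longrightarrow> lam * (norm v)\<^sup>2 \<le> (D2h x *v v) \<bullet> v"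
begin

lemma Dh_hom:
  assumes t: "t > 0"
  shows "Dh (t *\<^sub>R x) = t powr (p-1) *\<^sub>R Dh x"
proof -
  have d1: "((\<lambda>x. h (t *\<^sub>R x)) has_derivative (\<lambda>v. Dh (t *\<^sub>R x) \<bullet> (t *\<^sub>R v))) (at x)"
    using has_derivative_compose[OF has_derivative_scaleR_right[OF has_derivative_ident, of t] h_grad, of x]
    by (simp add: o_def)
  have d2: "((\<lambda>x. t powr p * h x) has_derivative (\<lambda>v. t powr p * (Dh x \<bullet> v))) (at x)"
    by (intro derivative_intros h_grad)
  have eq: "(\<lambda>x. h (t *\<^sub>R x)) = (\<lambda>x. t powr p * h x)"
    using h_hom[OF t] by auto
  have "(\<lambda>v. Dh (t *\<^sub>R x) \<bullet> (t *\<^sub>R v)) = (\<lambda>v. t powr p * (Dh x \<bullet> v))"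
    using has_derivative_unique[OF d1 d2[folded eq]] .
  then have "\<And>v. t * (Dh (t *\<^sub>R x) \<bullet> v) = t powr p * (Dh x \<bullet> v)"
    by (metis inner_scaleR_right)
  then have "\<And>v. Dh (t *\<^sub>R x) \<bullet> v = (t powr (p-1) *\<^sub>R Dh x) \<bullet> v"
    using t by (simp add: powr_diff field_simps)
  then show ?thesis using vector_eq_rdot by blast
qed

lemma D2h_hom:
  assumes t: "t > 0"
  shows "D2h (t *\<^sub>R x) *v v = t powr (p-2) *\<^sub>R (D2h x *v v)"
proof -
  have d1: "((\<lambda>x. Dh (t *\<^sub>R x)) has_derivative (\<lambda>v. D2h (t *\<^sub>R x) *v (t *\<^sub>R v))) (at x)"
    using has_derivative_compose[OF has_derivative_scaleR_right[OF has_derivative_ident, of t] h_hess, of x]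
    by (simp add: o_def)
  have d2: "((\<lambda>x. t powr (p-1) *\<^sub>R Dh x) has_derivative (\<lambda>v. t powr (p-1) *\<^sub>R (D2h x *v v))) (at x)"
    by (intro derivative_intros h_hess)
  have eq: "(\<lambda>x. Dh (t *\<^sub>R x)) = (\<lambda>x. t powr (p-1) *\<^sub>R Dh x)"
    using Dh_hom[OF t] by auto
  have "(\<lambda>v. D2h (t *\<^sub>R x) *v (t *\<^sub>R v)) = (\<lambda>v. t powr (p-1) *\<^sub>R (D2h x *v v))"
    using has_derivative_unique[OF d1 d2[folded eq]] .
  then have "t *\<^sub>R (D2h (t *\<^sub>R x) *v v) = t powr (p-1) *\<^sub>R (D2h x *v v)"
    by (metis matrix_vector_mult_scaleR)
  then have "(1/t) *\<^sub>R (t *\<^sub>R (D2h (t *\<^sub>R x) *v v)) = (1/t) *\<^sub>R (t powr (p-1) *\<^sub>R (D2h x *v v))"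
    by simp
  then show ?thesis
    using t by (simp add: powr_diff field_simps power2_eq_square)
qed

lemma contD2: "continuous_on UNIV (\<lambda>v. D2h v *v E)"
  using bounded_linear.continuous_on[OF bl_matvec h_C2] .

lemma hess_lo_gen:
  assumes "v \<noteq> 0"
  shows "lam * norm v powr (p-2) * (norm E)\<^sup>2 \<le> (D2h v *v E) \<bullet> E"
proof -
  have nv: "norm v > 0" using assms by simp
  have v: "v = norm v *\<^sub>R (v /\<^sub>R norm v)" using nv by simp
  have "D2h v *v E = norm v powr (p-2) *\<^sub>R (D2h (v /\<^sub>R norm v) *v E)"
    by (subst v, rule D2h_hom[OF nv])
  moreover have l: "lam * (norm E)\<^sup>2 \<le> (D2h (v /\<^sub>R norm v) *v E) \<bullet> E"
    using hess_lo nv by simp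
  ultimately show ?thesis
  proof -
    have "lam * norm v powr (p-2) * (norm E)\<^sup>2 = norm v powr (p-2) * (lam * (norm E)\<^sup>2)"
      by (simp add: mult_ac)
    also have "\<dots> \<le> norm v powr (p-2) * ((D2h (v /\<^sub>R norm v) *v E) \<bullet> E)"
      using l by (intro mult_left_mono) auto
    also have "\<dots> = (D2h v *v E) \<bullet> E"
      using \<open>D2h v *v E = _\<close> by simp
    finally show ?thesis .
  qed
qed

lemma hess_nonneg: "0 \<le> (D2h v *v E) \<bullet> E"
proof -
  have c: "continuous_on UNIV (\<lambda>v. (D2h v *v E) \<bullet> E)"
    by (intro continuous_intros contD2)
  have "0 \<le> (D2h v *v E) \<bullet> E" if "v \<noteq> 0" for v
    using hess_lo_gen[OF that, of E] lam
    by (smt (verit) mult_nonneg_nonneg powr_ge_zero zero_le_power2)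
  then show ?thesis
    using cont_extend_0[OF c _, of 1 0] by (cases "v = 0") auto
qed

end

context hsetup begin

lemma D2h_bound:
  obtains C2 where "C2 > 0"
    "\<And>v E R. norm v \<le> R \<Longrightarrow> 0 < R \<Longrightarrow> norm (D2h v *v E) \<le> C2 * R powr (p-2) * norm E"
proof -
  have "compact (D2h ` sphere 0 1)"
    using compact_sphere continuous_on_subset[OF h_C2 subset_UNIV] compact_continuous_image by blast
  then have "bounded (D2h ` sphere 0 1)" by (rule compact_imp_bounded)
  then obtain B where B0: "\<forall>M\<in>D2h ` sphere 0 1. norm M \<le> B"
    unfolding bounded_iff by (elim exE) (rule that)
  have B: "norm (D2h v) \<le> B" if "norm v = 1" for v
    using B0 that by simp
  define K where "K = real CARD('n) * real CARD('n)"
  define C2 where "C2 = K * max B 0 + 1"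
  have K: "K \<ge> 0" by (simp add: K_def)
  have "K * max B 0 \<ge> 0" using K by simp
  then have C2: "C2 > 0" unfolding C2_def by linarith
  have main: "norm (D2h v *v E) \<le> C2 * R powr (p-2) * norm E"
    if v0: "v \<noteq> 0" and vR: "norm v \<le> R" for v E R
  proof -
    have nv: "norm v > 0" using v0 by simp
    have vv: "v = norm v *\<^sub>R (v /\<^sub>R norm v)" using nv by simp
    have eq: "D2h v *v E = norm v powr (p-2) *\<^sub>R (D2h (v /\<^sub>R norm v) *v E)"
      by (subst vv, rule D2h_hom[OF nv])
    have "norm (D2h (v /\<^sub>R norm v) *v E) \<le> K * norm (D2h (v /\<^sub>R norm v)) * norm E"
      using mat_vec_norm_le unfolding K_def by blast
    also have "\<dots> \<le> C2 * norm E"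
    proof -
      have "norm (D2h (v /\<^sub>R norm v)) \<le> max B 0"
        using B[of "v /\<^sub>R norm v"] nv by simp
      then have "K * norm (D2h (v /\<^sub>R norm v)) \<le> K * max B 0"
        using K by (rule mult_left_mono)
      then have "K * norm (D2h (v /\<^sub>R norm v)) \<le> C2" unfolding C2_def by simp
      then show ?thesis by (rule mult_right_mono) simp
    qed
    finally have n1: "norm (D2h (v /\<^sub>R norm v) *v E) \<le> C2 * norm E" .
    have pw: "norm v powr (p-2) \<le> R powr (p-2)"
      using nv vR p by (intro powr_mono2) auto
    have "norm (D2h v *v E) = norm v powr (p-2) * norm (D2h (v /\<^sub>R norm v) *v E)"
      by (simp add: eq)
    also have "\<dots> \<le> R powr (p-2) * (C2 * norm E)"
      using n1 pw by (intro mult_mono) auto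
    finally show ?thesis by (simp add: mult_ac)
  qed
  show ?thesis
  proof (rule that[OF C2])
    fix v E :: "real^'n" and R :: real
    assume vR: "norm v \<le> R" and R: "0 < R"
    show "norm (D2h v *v E) \<le> C2 * R powr (p-2) * norm E"
    proof (cases "v = 0")
      case False with main vR show ?thesis by blast
    next
      case True
      have c: "continuous_on UNIV (\<lambda>v. - norm (D2h v *v E))"
        by (intro continuous_intros contD2)
      have "- (C2 * R powr (p-2) * norm E) \<le> - norm (D2h 0 *v E)"
      proof (rule cont_extend_0[OF c R])
        fix w :: "real^'n" assume "w \<noteq> 0" "norm w < R"
        then show "- (C2 * R powr (p-2) * norm E) \<le> - norm (D2h w *v E)"
          using main[of w R E] by simp
      qed
      then show ?thesis using True by simp
    qed
  qed
qed

lemma onorm_D2h: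
  assumes "C2 > 0" "\<And>v E R. norm v \<le> R \<Longrightarrow> 0 < R \<Longrightarrow> norm (D2h v *v E) \<le> C2 * R powr (p-2) * norm E"
    and "norm v \<le> R" "0 < R"
  shows "onorm (\<lambda>E. D2h v *v E) \<le> C2 * R powr (p-2)"
  by (rule onorm_le) (use assms in auto)

lemma Dh_lip:
  assumes C2: "C2 > 0" "\<And>v E R. norm v \<le> R \<Longrightarrow> 0 < R \<Longrightarrow> norm (D2h v *v E) \<le> C2 * R powr (p-2) * norm E"
    and a: "norm a \<le> R" and b: "norm b \<le> R" and R: "0 < R"
  shows "norm (Dh a - Dh b) \<le> C2 * R powr (p-2) * norm (a - b)"
proof (rule differentiable_bound[of "cball 0 R" Dh "\<lambda>x v. D2h x *v v"])
  show "convex (cball (0::real^'n) R)" by simp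
  show "\<And>x. x \<in> cball 0 R \<Longrightarrow> (Dh has_derivative (*v) (D2h x)) (at x within cball 0 R)"
    using h_hess has_derivative_at_withinI by blast
  show "\<And>x. x \<in> cball 0 R \<Longrightarrow> onorm ((*v) (D2h x)) \<le> C2 * R powr (p - 2)"
    using onorm_D2h[OF C2 _ R] by simp
qed (use a b in auto)

lemma line_deriv_h:
  "((\<lambda>t. h (P + t *\<^sub>R E)) has_real_derivative (Dh (P + t *\<^sub>R E) \<bullet> E)) (at t)"
proof -
  have "((\<lambda>t. P + t *\<^sub>R E) has_derivative (\<lambda>s. s *\<^sub>R E)) (at t)"
    by (intro derivative_eq_intros) auto
  from has_derivative_compose[OF this h_grad]
  have "((\<lambda>t. h (P + t *\<^sub>R E)) has_derivative (\<lambda>s. Dh (P + t *\<^sub>R E) \<bullet> (s *\<^sub>R E))) (at t)"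
    by (simp add: o_def)
  then show ?thesis
    unfolding has_field_derivative_def
    by (rule has_derivative_eq_rhs) (auto simp: fun_eq_iff)
qed

lemma line_deriv_Dh:
  "((\<lambda>t. Dh (P + t *\<^sub>R E) \<bullet> z) has_real_derivative ((D2h (P + t *\<^sub>R E) *v E) \<bullet> z)) (at t)"
proof -
  have "((\<lambda>t. P + t *\<^sub>R E) has_derivative (\<lambda>s. s *\<^sub>R E)) (at t)"
    by (intro derivative_eq_intros) auto
  from has_derivative_compose[OF this h_hess]
  have "((\<lambda>t. Dh (P + t *\<^sub>R E)) has_derivative (\<lambda>s. D2h (P + t *\<^sub>R E) *v (s *\<^sub>R E))) (at t)"
    by (simp add: o_def)
  then have "((\<lambda>t. Dh (P + t *\<^sub>R E) \<bullet> z) has_derivative (\<lambda>s. (D2h (P + t *\<^sub>R E) *v (s *\<^sub>R E)) \<bullet> z)) (at t)"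
    by (rule bounded_linear.has_derivative[OF bounded_linear_inner_left])
  moreover have "(\<lambda>s. (D2h (P + t *\<^sub>R E) *v (s *\<^sub>R E)) \<bullet> z) = (*) ((D2h (P + t *\<^sub>R E) *v E) \<bullet> z)"
    by (rule ext) (simp add: matrix_vector_mult_scaleR)
  ultimately show ?thesis
    unfolding has_field_derivative_def by simp
qed

lemma h_convex_ineq: "h q \<ge> h P + Dh P \<bullet> (q - P)"
proof -
  define E where "E = q - P"
  define k where "k = (\<lambda>t. Dh (P + t *\<^sub>R E) \<bullet> E)"
  have kmono: "k 0 \<le> k t" if "0 \<le> t" for t
    unfolding k_def
    by (rule DERIV_nonneg_imp_nondecreasing[OF that]) (use line_deriv_Dh hess_nonneg in blast)
  define \<phi> where "\<phi> = (\<lambda>t. h (P + t *\<^sub>R E) - t * k 0)"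
  have "\<phi> 0 \<le> \<phi> 1"
  proof (rule DERIV_nonneg_imp_nondecreasing[of 0 1 \<phi>])
    fix t :: real assume "0 \<le> t" "t \<le> 1"
    have "DERIV \<phi> t :> k t - k 0"
      unfolding \<phi>_def k_def
      using DERIV_diff[OF line_deriv_h[of P E t] DERIV_cmult_Id[of "k 0" t]] by (simp add: k_def mult.commute)
    then show "\<exists>y. DERIV \<phi> t :> y \<and> 0 \<le> y"
      using kmono[OF \<open>0 \<le> t\<close>] by auto
  qed simp
  then show ?thesis
    unfolding \<phi>_def k_def E_def by simp
qed

end

lemma interval_far:
  fixes P E :: "real^'n"
  assumes E: "E \<noteq> 0"
  obtains t1 where "0 \<le> t1" "t1 + 1/4 \<le> 1"
    "\<And>t. t1 \<le> t \<Longrightarrow> t \<le> t1 + 1/4 \<Longrightarrow> max (norm P) (norm E) / 8 \<le> norm (P + t *\<^sub>R E)"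
proof (cases "norm E \<le> norm P / 2")
  case True
  show ?thesis
  proof (rule that[of 0])
    fix t :: real assume t: "0 \<le> t" "t \<le> 0 + 1/4"
    have "norm (t *\<^sub>R E) \<le> norm E" using t mult_left_le_one_le[of "norm E" t] by simp
    moreover have "norm P - norm (t *\<^sub>R E) \<le> norm (P + t *\<^sub>R E)"
      using norm_triangle_ineq4[of "P + t *\<^sub>R E" "t *\<^sub>R E"] by simp
    ultimately show "max (norm P) (norm E) / 8 \<le> norm (P + t *\<^sub>R E)"
      using True by (simp add: max_def) (smt (verit) norm_ge_zero)
  qed auto
next
  case False
  define \<nu> where "\<nu> = E /\<^sub>R norm E"
  have nE: "norm E > 0" using E by simp
  have nu1: "norm \<nu> = 1" using nE by (simp add: \<nu>_def)
  define \<tau> where "\<tau> = - (P \<bullet> \<nu>) / norm E"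
  have key: "norm E * \<bar>t - \<tau>\<bar> \<le> norm (P + t *\<^sub>R E)" for t
  proof -
    have "(P + t *\<^sub>R E) \<bullet> \<nu> = P \<bullet> \<nu> + t * norm E"
      using nE by (simp add: \<nu>_def inner_add_left algebra_simps dot_square_norm power2_eq_square)
    also have "\<dots> = norm E * (t - \<tau>)"
      using nE by (simp add: \<tau>_def field_simps)
    finally have "\<bar>(P + t *\<^sub>R E) \<bullet> \<nu>\<bar> = norm E * \<bar>t - \<tau>\<bar>"
      using nE by (simp add: abs_mult)
    moreover have "\<bar>(P + t *\<^sub>R E) \<bullet> \<nu>\<bar> \<le> norm (P + t *\<^sub>R E)"
      using Cauchy_Schwarz_ineq2[of "P + t *\<^sub>R E" \<nu>] nu1 by simp
    ultimately show ?thesis by simp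
  qed
  have mx: "max (norm P) (norm E) / 8 \<le> norm E / 4"
    using False nE by (auto simp: max_def)
  show ?thesis
  proof (cases "\<tau> \<ge> 1/2")
    case True
    show ?thesis
    proof (rule that[of 0])
      fix t :: real assume t: "0 \<le> t" "t \<le> 0 + 1/4"
      have "norm E / 4 \<le> norm E * \<bar>t - \<tau>\<bar>"
      proof -
        have "1/4 \<le> \<bar>t - \<tau>\<bar>" using t True by auto
        then have "norm E * (1/4) \<le> norm E * \<bar>t - \<tau>\<bar>" using nE by (intro mult_left_mono) auto
        then show ?thesis by simp
      qed
      then show "max (norm P) (norm E) / 8 \<le> norm (P + t *\<^sub>R E)"
        using key[of t] mx by linarith
    qed auto
  next
    case False
    show ?thesis
    proof (rule that[of "3/4"])
      fix t :: real assume t: "3/4 \<le> t" "t \<le> 3/4 + 1/4"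
      have "norm E / 4 \<le> norm E * \<bar>t - \<tau>\<bar>"
      proof -
        have "1/4 \<le> \<bar>t - \<tau>\<bar>" using t False by auto
        then have "norm E * (1/4) \<le> norm E * \<bar>t - \<tau>\<bar>" using nE by (intro mult_left_mono) auto
        then show ?thesis by simp
      qed
      then show "max (norm P) (norm E) / 8 \<le> norm (P + t *\<^sub>R E)"
        using key[of t] mx by linarith
    qed auto
  qed
qed

context hsetup begin

lemma gprime_bound:
  assumes C2: "C2 > 0" "\<And>v E R. norm v \<le> R \<Longrightarrow> 0 < R \<Longrightarrow> norm (D2h v *v E) \<le> C2 * R powr (p-2) * norm E"
    and E: "E \<noteq> 0" and rho: "\<rho> > 0" and k: "1 \<le> k"
    and w: "C2 * norm w \<le> lam/2 * \<rho>"
    and z: "z = w - (k * \<rho> / norm E) *\<^sub>R E"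
  shows gprime_neg: "v \<noteq> 0 \<Longrightarrow> (D2h v *v E) \<bullet> z \<le> - (lam/2 * \<rho> * norm E * norm v powr (p-2))"
    and gprime_nonpos: "(D2h v *v E) \<bullet> z \<le> 0"
proof -
  have main: "(D2h v *v E) \<bullet> z \<le> - (lam/2 * \<rho> * norm E * norm v powr (p-2))" if v: "v \<noteq> 0" for v
  proof -
    define X where "X = norm v powr (p-2)"
    have X: "X \<ge> 0" by (simp add: X_def)
    have nE: "norm E > 0" using E by simp
    have "(D2h v *v E) \<bullet> w \<le> norm (D2h v *v E) * norm w"
      by (rule Cauchy_Schwarz_ineq2[THEN order_trans[OF abs_ge_self]])
    also have "\<dots> \<le> (C2 * X * norm E) * norm w"
      using C2(2)[of v "norm v" E] v unfolding X_def by (intro mult_right_mono) auto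
    also have "\<dots> = X * norm E * (C2 * norm w)" by (simp add: mult_ac)
    also have "\<dots> \<le> X * norm E * (lam/2 * \<rho>)"
      using w X by (intro mult_left_mono) auto
    finally have t1: "(D2h v *v E) \<bullet> w \<le> X * norm E * (lam/2 * \<rho>)" .
    have "lam * X * (norm E)\<^sup>2 \<le> (D2h v *v E) \<bullet> E"
      using hess_lo_gen[OF v, of E] unfolding X_def .
    then have "(k * \<rho> / norm E) * (lam * X * (norm E)\<^sup>2) \<le> (k * \<rho> / norm E) * ((D2h v *v E) \<bullet> E)"
      using k rho nE by (intro mult_left_mono) auto
    moreover have "(k * \<rho> / norm E) * (lam * X * (norm E)\<^sup>2) = k * \<rho> * lam * X * norm E"
      using nE by (simp add: power2_eq_square field_simps)
    moreover have "\<rho> * lam * X * norm E \<le> k * \<rho> * lam * X * norm E"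
      using k rho lam X nE by (intro mult_right_mono) (auto simp: mult_nonneg_nonneg)
    ultimately have t2: "\<rho> * lam * X * norm E \<le> (k * \<rho> / norm E) * ((D2h v *v E) \<bullet> E)"
      by linarith
    have "(D2h v *v E) \<bullet> z = (D2h v *v E) \<bullet> w - (k * \<rho> / norm E) * ((D2h v *v E) \<bullet> E)"
      by (simp add: z inner_diff_right)
    with t1 t2 show ?thesis unfolding X_def[symmetric] by (simp add: algebra_simps)
  qed
  then show "v \<noteq> 0 \<Longrightarrow> (D2h v *v E) \<bullet> z \<le> - (lam/2 * \<rho> * norm E * norm v powr (p-2))" .
  have nn: "0 \<le> - ((D2h v *v E) \<bullet> z)" if "v \<noteq> 0" for v
  proof -
    have "0 \<le> lam/2 * \<rho> * norm E * norm v powr (p-2)"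
      using lam rho by simp
    with main[OF that] show ?thesis by linarith
  qed
  have c: "continuous_on UNIV (\<lambda>v. - ((D2h v *v E) \<bullet> z))"
    by (intro continuous_intros contD2)
  show "(D2h v *v E) \<bullet> z \<le> 0"
  proof (cases "v = 0")
    case True
    have "0 \<le> - ((D2h 0 *v E) \<bullet> z)"
      by (rule cont_extend_0[OF c zero_less_one]) (use nn in auto)
    then show ?thesis using True by simp
  qed (use nn in force)
qed

lemma key:
  assumes C2: "C2 > 0" "\<And>v E R. norm v \<le> R \<Longrightarrow> 0 < R \<Longrightarrow> norm (D2h v *v E) \<le> C2 * R powr (p-2) * norm E"
    and E: "u \<noteq> u0" and rho: "\<rho> > 0" and k: "1 \<le> k"
    and w: "C2 * norm w \<le> lam/2 * \<rho>"
    and z: "z = w - (k * \<rho> / norm (u - u0)) *\<^sub>R (u - u0)"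
    and zb: "norm z \<le> 3 * \<rho>"
    and far: "(norm u0 + \<rho>) / 128 \<le> norm (u0 + z) / 8"
    and ineq: "0 \<le> (Dh (u + z) - Dh q) \<bullet> z"
    and M: "M \<ge> 3" "norm (u0 + z) \<le> M * (norm u0 + \<rho>)" "norm q \<le> M * (norm u0 + \<rho>)"
       "norm (u0 + z - q) \<le> M * \<rho>"
  shows "norm (u - u0) \<le> 24 * C2 * M * (128 * M) powr (p-2) / lam * \<rho>"
proof -
  define E where "E = u - u0"
  have E0: "E \<noteq> 0" using E by (simp add: E_def)
  define W where "W = norm u0 + \<rho>"
  have W: "W > 0" using rho by (simp add: W_def add_nonneg_pos)
  define g where "g = (\<lambda>t. Dh ((u0 + z) + t *\<^sub>R E) \<bullet> z)"
  have gd: "(g has_real_derivative ((D2h ((u0 + z) + t *\<^sub>R E) *v E) \<bullet> z)) (at t)" for t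
    unfolding g_def by (rule line_deriv_Dh)
  have zE: "z = w - (k * \<rho> / norm E) *\<^sub>R E" using z by (simp add: E_def)
  have gb1: "(D2h v *v E) \<bullet> z \<le> - (lam / 2 * \<rho> * norm E * norm v powr (p - 2))" if "v \<noteq> 0" for v
    by (rule gprime_neg[of C2 E \<rho> k w z v]) (use C2 E0 rho k w zE that in auto)
  have gb2: "(D2h v *v E) \<bullet> z \<le> 0" for v
    by (rule gprime_nonpos[of C2 E \<rho> k w z v]) (use C2 E0 rho k w zE in auto)
  have g1: "g 1 = Dh (u + z) \<bullet> z" by (simp add: g_def E_def add.commute)
  have g0: "g 0 = Dh (u0 + z) \<bullet> z" by (simp add: g_def)
  have "(Dh (u0 + z) - Dh q) \<bullet> z \<le> norm (Dh (u0 + z) - Dh q) * norm z"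
    by (rule Cauchy_Schwarz_ineq2[THEN order_trans[OF abs_ge_self]])
  also have "\<dots> \<le> (C2 * (M * W) powr (p-2) * (M * \<rho>)) * (3 * \<rho>)"
  proof (intro mult_mono)
    have MW: "0 < M * W" using M W by simp
    have "norm (Dh (u0 + z) - Dh q) \<le> C2 * (M * W) powr (p-2) * norm (u0 + z - q)"
      by (rule Dh_lip[OF C2 _ _ MW]) (use M in \<open>auto simp: W_def\<close>)
    also have "\<dots> \<le> C2 * (M * W) powr (p-2) * (M * \<rho>)"
      using M C2 by (intro mult_left_mono) auto
    finally show "norm (Dh (u0 + z) - Dh q) \<le> C2 * (M * W) powr (p-2) * (M * \<rho>)" .
  qed (use zb C2 M rho in auto)
  finally have err: "(Dh (u0 + z) - Dh q) \<bullet> z \<le> 3 * C2 * M * (M * W) powr (p-2) * \<rho> * \<rho>"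
    by (simp add: mult_ac)
  have split: "(Dh (u + z) - Dh q) \<bullet> z = (g 1 - g 0) + (Dh (u0 + z) - Dh q) \<bullet> z"
    by (simp add: g1 g0 inner_diff_left)
  obtain t1 where t1: "0 \<le> t1" "t1 + 1/4 \<le> 1"
    "\<And>t. t1 \<le> t \<Longrightarrow> t \<le> t1 + 1/4 \<Longrightarrow> max (norm (u0 + z)) (norm E) / 8 \<le> norm ((u0 + z) + t *\<^sub>R E)"
    using interval_far[OF E0] by blast
  define c where "c = lam/2 * \<rho> * norm E * (W/128) powr (p-2)"
  have "g t1 \<le> g 0"
    by (rule DERIV_nonpos_imp_nonincreasing[OF t1(1)]) (use gd gb2 in blast)
  moreover have "g 1 \<le> g (t1 + 1/4)"
    by (rule DERIV_nonpos_imp_nonincreasing[OF t1(2)]) (use gd gb2 in blast)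
  moreover have "g (t1 + 1/4) + c * (t1 + 1/4) \<le> g t1 + c * t1"
  proof (rule DERIV_nonpos_imp_nonincreasing[of t1 "t1 + 1/4" "\<lambda>t. g t + c * t", simplified])
    fix t assume tt: "t1 \<le> t" "t \<le> t1 + 1/4"
    define v where "v = (u0 + z) + t *\<^sub>R E"
    have vm: "W / 128 \<le> norm v"
    proof -
      have "norm (u0 + z) / 8 \<le> max (norm (u0 + z)) (norm E) / 8" by simp
      then show ?thesis using t1(3)[OF tt] far unfolding v_def W_def by linarith
    qed
    then have v0: "v \<noteq> 0" using W by auto
    have "(W/128) powr (p-2) \<le> norm v powr (p-2)"
      using vm W p by (intro powr_mono2) auto
    then have "c \<le> lam/2 * \<rho> * norm E * norm v powr (p-2)"
      unfolding c_def using lam rho by (intro mult_left_mono) auto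
    moreover have "(D2h v *v E) \<bullet> z \<le> - (lam/2 * \<rho> * norm E * norm v powr (p-2))"
      by (rule gb1[OF v0])
    ultimately have "(D2h v *v E) \<bullet> z + c \<le> 0" by linarith
    moreover have "((\<lambda>t. g t + c * t) has_real_derivative ((D2h v *v E) \<bullet> z + c)) (at t)"
      unfolding v_def by (rule derivative_eq_intros gd | simp)+
    ultimately show "\<exists>y. ((\<lambda>t. g t + c * t) has_real_derivative y) (at t) \<and> y \<le> 0" by blast
  qed
  ultimately have "g 1 - g 0 \<le> - c / 4" by (simp add: algebra_simps)
  with ineq split err have main: "c / 4 \<le> 3 * C2 * M * (M * W) powr (p-2) * \<rho> * \<rho>"
    by linarith
  define P where "P = W powr (p-2)"
  have P: "P > 0" using W by (simp add: P_def)
  have cP: "c = lam/2 * \<rho> * norm E * P / 128 powr (p-2)"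
    unfolding c_def P_def using W by (simp add: powr_divide)
  have MP: "(M * W) powr (p-2) = M powr (p-2) * P"
    unfolding P_def using W M by (simp add: powr_mult)
  have M128: "(128 * M) powr (p-2) = 128 powr (p-2) * M powr (p-2)"
    using M by (simp add: powr_mult)
  have pos128: "128 powr (p-2) > (0::real)" by simp
  from main have "lam/2 * \<rho> * norm E * P / 128 powr (p-2) / 4 \<le> 3 * C2 * M * (M powr (p-2) * P) * \<rho> * \<rho>"
    unfolding cP MP .
  then have "lam * norm E * (\<rho> * P) \<le> (24 * C2 * M * (128 powr (p-2) * M powr (p-2)) * \<rho>) * (\<rho> * P)"
    using pos128 by (simp add: field_simps)
  then have "lam * norm E \<le> 24 * C2 * M * (128 powr (p-2) * M powr (p-2)) * \<rho>"
    using P rho by (simp add: mult_le_cancel_right)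
  then show ?thesis
    unfolding E_def M128 using lam by (simp add: field_simps)
qed

end

lemma exists_good:
  fixes G :: "real^'n \<Rightarrow> real"
  assumes int: "set_integrable lebesgue (ball x0 R) G"
    and nn: "\<And>x. G x \<ge> 0"
    and sub: "ball c r \<subseteq> ball x0 R"
    and ae: "AE y in lebesgue. Q y"
    and lt: "(LINT x:ball x0 R|lebesgue. G x) < \<gamma> * measure lebesgue (ball c r)"
  shows "\<exists>y\<in>ball c r. Q y \<and> G y \<le> \<gamma>"
proof (rule ccontr)
  assume "\<not> ?thesis"
  then have bad: "\<And>y. y \<in> ball c r \<Longrightarrow> Q y \<Longrightarrow> \<gamma> < G y" by force
  have AE: "AE y in lebesgue. indicator (ball c r) y * \<gamma> \<le> indicator (ball x0 R) y * G y"
    using ae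
  proof eventually_elim
    case (elim y)
    show ?case
    proof (cases "y \<in> ball c r")
      case True
      then have "y \<in> ball x0 R" using sub by auto
      then show ?thesis using True bad[OF True elim] by simp
    next
      case False
      then show ?thesis using nn[of y] by (simp add: indicator_def)
    qed
  qed
  have i1: "integrable lebesgue (indicat_real (ball c r))"
    using lmeasurable_ball[of c r] by (simp add: integrable_indicator_iff fmeasurable_def)
  have i1': "integrable lebesgue (\<lambda>y. indicat_real (ball c r) y * \<gamma>)"
    using i1 by simp
  have i2: "integrable lebesgue (\<lambda>y. indicat_real (ball x0 R) y * G y)"
    using int unfolding set_integrable_def by simp
  have "(LINT y|lebesgue. indicat_real (ball c r) y * \<gamma>) \<le> (LINT y|lebesgue. indicat_real (ball x0 R) y * G y)"
    by (rule integral_mono_AE[OF i1' i2 AE])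
  moreover have "(LINT y|lebesgue. indicat_real (ball c r) y * \<gamma>) = \<gamma> * measure lebesgue (ball c r)"
    using lmeasurable_ball[of c r] by (simp add: fmeasurable_def)
  moreover have "(LINT y|lebesgue. indicat_real (ball x0 R) y * G y) = (LINT x:ball x0 R|lebesgue. G x)"
    by (simp add: set_lebesgue_integral_def)
  ultimately show False using lt by linarith
qed

lemma measure_ball_eq:
  assumes "r \<ge> 0"
  shows "measure lebesgue (ball (c::real^'n) r) = r ^ CARD('n) * measure lebesgue (ball (0::real^'n) 1)"
  using content_ball_conv_unit_ball[of r c] assms by (simp add: measure_def)

lemma unit_ball_pos: "measure lebesgue (ball (0::real^'n) 1) > 0"
  using content_ball_pos[of 1 "0::real^'n"] by (simp add: measure_def)

lemma powr_sum_le: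
  fixes a B q :: real
  assumes "a \<ge> 0" "B \<ge> 0" "q > 0"
  shows "(a + B) powr q \<le> 2 powr q * (a powr q + B powr q)"
proof -
  have "(a + B) powr q \<le> (2 * max a B) powr q"
    using assms by (intro powr_mono2) auto
  also have "\<dots> = 2 powr q * max a B powr q"
    using assms by (simp add: powr_mult)
  also have "max a B powr q \<le> a powr q + B powr q"
    by (simp add: max_def)
  then have "2 powr q * max a B powr q \<le> 2 powr q * (a powr q + B powr q)"
    by (intro mult_left_mono) auto
  finally show ?thesis .
qed

lemma G_set_integrable:
  fixes f :: "real^'n \<Rightarrow> real^'n" and A :: "real^'n^'n"
  assumes f_meas: "f \<in> borel_measurable (lebesgue_on (ball x0 \<epsilon>))"
    and f_Lp: "integrable (lebesgue_on (ball x0 \<epsilon>)) (\<lambda>x. norm (f x) powr q)"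
    and q: "q > 0" and R: "R \<le> \<epsilon>"
  shows "set_integrable lebesgue (ball x0 R) (\<lambda>x. norm (f x - A *v x - b) powr q)"
proof -
  define S where "S = ball x0 \<epsilon>"
  define nA where "nA = real CARD('n) * real CARD('n) * norm A"
  have nA: "norm (A *v x) \<le> nA * norm x" for x
    unfolding nA_def by (rule mat_vec_norm_le)
  have nA0: "nA \<ge> 0" unfolding nA_def by simp
  define B where "B = nA * (norm x0 + \<bar>\<epsilon>\<bar>) + norm b"
  have bnd: "norm (A *v x + b) \<le> B" if "x \<in> S" for x
  proof -
    have "norm x \<le> norm x0 + \<bar>\<epsilon>\<bar>"
      using that norm_triangle_ineq2[of x x0] by (auto simp: S_def dist_norm norm_minus_commute)
    then have "nA * norm x \<le> nA * (norm x0 + \<bar>\<epsilon>\<bar>)" using nA0 by (intro mult_left_mono)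
    then show ?thesis using nA[of x] norm_triangle_ineq[of "A *v x" b] unfolding B_def by linarith
  qed
  have B0: "B \<ge> 0" unfolding B_def using nA0 by simp
  have SL: "S \<in> sets lebesgue" unfolding S_def by simp
  have [measurable]: "f \<in> borel_measurable (lebesgue_on S)" using f_meas by (simp add: S_def)
  have [measurable]: "(\<lambda>x. A *v x) \<in> borel_measurable (lebesgue_on S)"
    by (rule continuous_imp_measurable_on_sets_lebesgue[OF _ SL])
       (intro bounded_linear.continuous_on[OF matrix_vector_mul_bounded_linear] continuous_on_id)
  have meas: "(\<lambda>x. norm (f x - A *v x - b) powr q) \<in> borel_measurable (lebesgue_on S)"
    by measurable
  interpret fm: finite_measure "lebesgue_on S"
    unfolding S_def by (rule finite_measure_lebesgue_on) simp
  have dom: "integrable (lebesgue_on S) (\<lambda>x. 2 powr q * (norm (f x) powr q + B powr q))"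
    using f_Lp unfolding S_def[symmetric] by (intro integrable_mult_right integrable_add) auto
  have "integrable (lebesgue_on S) (\<lambda>x. norm (f x - A *v x - b) powr q)"
  proof (rule Bochner_Integration.integrable_bound[OF dom meas], rule AE_I2)
    fix x assume "x \<in> space (lebesgue_on S)"
    then have xS: "x \<in> S" by simp
    have "norm (f x - A *v x - b) = norm (f x - (A *v x + b))" by (simp add: algebra_simps)
    also have "\<dots> \<le> norm (f x) + norm (A *v x + b)" by (rule norm_triangle_ineq4)
    also have "\<dots> \<le> norm (f x) + B" using bnd[OF xS] by simp
    finally have "norm (f x - A *v x - b) powr q \<le> (norm (f x) + B) powr q"
      using q by (intro powr_mono2) auto
    also have "\<dots> \<le> 2 powr q * (norm (f x) powr q + B powr q)"
      using B0 q by (intro powr_sum_le) auto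
    finally show "norm (norm (f x - A *v x - b) powr q) \<le> norm (2 powr q * (norm (f x) powr q + B powr q))"
      by simp
  qed
  then have "set_integrable lebesgue S (\<lambda>x. norm (f x - A *v x - b) powr q)"
    unfolding set_integrable_def using SL by (subst (asm) integrable_restrict_space) auto
  then show ?thesis
    by (rule set_integrable_subset) (use R in \<open>auto simp: S_def\<close>)
qed

lemma lt_lemma:
  fixes n :: nat and p \<eta> \<kappa> s U I c0 :: real
  assumes p: "p \<ge> 2" and eta: "\<eta> > 0" and ka: "\<kappa> > 0" and s: "s > 0" and U: "U > 0" and I: "I \<ge> 0"
    and F: "(I / ((2* s)^n * U)) powr (1/(p-1)) \<le> c0 * (2* s)"
    and c0: "c0 = \<eta>/2 * (\<kappa>^n * \<eta>^n / 2^(n+1)) powr (1/(p-1))"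
  shows "I < (\<eta>* s) powr (p-1) * ((\<kappa>*(\<eta>* s))^n * U)"
proof -
  define m where "m = (2* s)^n * U"
  have m: "m > 0" using s U by (simp add: m_def)
  define X where "X = I / m"
  have X: "X \<ge> 0" using I m by (simp add: X_def)
  define K where "K = (\<kappa>^n * \<eta>^n / 2^(n+1)) powr (1/(p-1))"
  have Kp: "K powr (p-1) = \<kappa>^n * \<eta>^n / 2^(n+1)"
    unfolding K_def using p ka eta by (simp add: powr_powr)
  have "X = (X powr (1/(p-1))) powr (p-1)"
    using p X by (simp add: powr_powr)
  also have "\<dots> \<le> (c0 * (2* s)) powr (p-1)"
    using F p by (intro powr_mono2) (auto simp: X_def m_def)
  also have "c0 * (2* s) = (\<eta>* s) * K" unfolding c0 K_def by simp
  also have "((\<eta>* s) * K) powr (p-1) = (\<eta>* s) powr (p-1) * (\<kappa>^n * \<eta>^n / 2^(n+1))"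
  proof -
    have "((\<eta> * s) * K) powr (p-1) = (\<eta> * s) powr (p-1) * K powr (p-1)"
      using eta s by (simp add: powr_mult K_def)
    then show ?thesis by (simp add: Kp)
  qed
  finally have Xb: "X \<le> (\<eta>* s) powr (p-1) * (\<kappa>^n * \<eta>^n / 2^(n+1))" .
  have "I = X * m" using m by (simp add: X_def)
  also have "\<dots> \<le> (\<eta>* s) powr (p-1) * (\<kappa>^n * \<eta>^n / 2^(n+1)) * m"
    using Xb m by (intro mult_right_mono) auto
  also have "\<dots> = (\<eta>* s) powr (p-1) * ((\<kappa>*(\<eta>* s))^n * U) / 2"
    unfolding m_def by (simp add: power_mult_distrib field_simps)
  also have "\<dots> < (\<eta>* s) powr (p-1) * ((\<kappa>*(\<eta>* s))^n * U)"
    using eta s ka U by simp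
  finally show ?thesis .
qed

lemma mono_ineq:
  assumes mono: "h_monotone h T" and conv: "\<And>P q. h q \<ge> h P + Dh P \<bullet> (q - P)"
    and xi: "\<xi> \<in> T x" and eta: "\<zeta> \<in> T y"
  shows "0 \<le> (Dh (y - \<xi>) - Dh (x - \<zeta>)) \<bullet> (y - x)"
proof -
  have m: "h (x - \<xi>) + h (y - \<zeta>) \<le> h (x - \<zeta>) + h (y - \<xi>)"
    using mono xi eta unfolding h_monotone_def by blast
  have c1: "h (x - \<xi>) \<ge> h (y - \<xi>) + Dh (y - \<xi>) \<bullet> ((x - \<xi>) - (y - \<xi>))" by (rule conv)
  have c2: "h (y - \<zeta>) \<ge> h (x - \<zeta>) + Dh (x - \<zeta>) \<bullet> ((y - \<zeta>) - (x - \<zeta>))" by (rule conv)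
  have "(x - \<xi>) - (y - \<xi>) = - (y - x)" "(y - \<zeta>) - (x - \<zeta>) = y - x" by (simp_all add: algebra_simps)
  moreover have "Dh (y - \<xi>) \<bullet> (x - y) = - (Dh (y - \<xi>) \<bullet> (y - x))"
    by (metis inner_minus_right minus_diff_eq)
  ultimately show ?thesis using m c1 c2 by (simp add: inner_diff_left)
qed

context hsetup begin

lemma step:
  fixes A :: "real^'n^'n"
  assumes C2: "C2 > 0" "\<And>v E R. norm v \<le> R \<Longrightarrow> 0 < R \<Longrightarrow> norm (D2h v *v E) \<le> C2 * R powr (p-2) * norm E"
    and nA: "\<And>z. norm (A *v z) \<le> nA * norm z" "nA \<ge> 0"
    and ka: "\<kappa> > 0" "\<kappa> \<le> 1/8" "C2 * \<kappa> \<le> lam/2"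
    and rho: "\<rho> > 0"
    and u: "u = x - \<xi>" and u0: "u0 = x - (A *v x + b)"
    and E: "u \<noteq> u0"
    and k: "k = 1 \<or> k = 2"
    and cen: "cen = x - (k * \<rho> / norm (u - u0)) *\<^sub>R (u - u0)"
    and far: "\<rho>/2 \<le> norm (u0 - (k * \<rho> / norm (u - u0)) *\<^sub>R (u - u0))"
    and y: "y \<in> ball cen (\<kappa> * \<rho>)"
    and ineq: "0 \<le> (Dh (y - \<xi>) - Dh (x - fy)) \<bullet> (y - x)"
    and d: "norm (fy - A *v y - b) \<le> \<rho>"
  shows "norm (u - u0) \<le> 24 * C2 * (4 + 3*nA) * (128 * (4 + 3*nA)) powr (p-2) / lam * \<rho>"
proof -
  define M where "M = 4 + 3*nA"
  define z where "z = y - x"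
  define w where "w = y - cen"
  define V where "V = (k * \<rho> / norm (u - u0)) *\<^sub>R (u - u0)"
  have nE: "norm (u - u0) > 0" using E by simp
  have k12: "1 \<le> k" "k \<le> 2" using k by auto
  have nV: "norm V = k * \<rho>" unfolding V_def using nE k12 rho by simp
  have zw: "z = w - (k * \<rho> / norm (u - u0)) *\<^sub>R (u - u0)"
    unfolding z_def w_def cen by (simp add: algebra_simps)
  have nw: "norm w < \<kappa> * \<rho>" using y unfolding w_def by (simp add: dist_norm norm_minus_commute)
  have wC: "C2 * norm w \<le> lam/2 * \<rho>"
  proof -
    have "C2 * norm w \<le> C2 * (\<kappa> * \<rho>)" using nw C2 by (intro mult_left_mono) auto
    also have "\<dots> = (C2 * \<kappa>) * \<rho>" by simp
    also have "\<dots> \<le> lam/2 * \<rho>" using ka rho by (intro mult_right_mono) auto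
    finally show ?thesis .
  qed
  have kr: "\<kappa> * \<rho> \<le> \<rho>/8" using ka rho by (simp add: mult_right_mono)
  have zV: "z = w - V" using zw by (simp add: V_def)
  have k2r: "k * \<rho> \<le> 2 * \<rho>" using k12 rho by (simp add: mult_right_mono)
  have zb: "norm z \<le> 3 * \<rho>"
    using norm_triangle_ineq4[of w V] nV nw kr k2r rho unfolding zV by linarith
  have u0z: "u0 + z = (u0 - V) + w" using zV by (simp add: algebra_simps)
  have f1: "norm (u0 + z) \<ge> 3 * \<rho> / 8"
  proof -
    have "norm (u0 - V) - norm (- w) \<le> norm (u0 - V - - w)" by (rule norm_triangle_ineq2)
    then have "norm (u0 - V) - norm w \<le> norm (u0 + z)" unfolding u0z by simp
    then show ?thesis using far nw kr unfolding V_def[symmetric] by linarith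
  qed
  have f2: "norm (u0 + z) \<ge> norm u0 - 2 * \<rho> - \<rho>/8"
  proof -
    have "norm u0 - norm (w - V) \<le> norm (u0 + z)"
      using norm_diff_ineq[of u0 "w - V"] zV by simp
    moreover have "norm (w - V) \<le> norm w + norm V" by (rule norm_triangle_ineq4)
    ultimately show ?thesis using nV nw kr k2r rho by linarith
  qed
  have farz: "(norm u0 + \<rho>) / 128 \<le> norm (u0 + z) / 8"
  proof -
    have a: "3 * \<rho> \<le> 8 * norm (u0 + z)" using f1 by simp
    have b: "8 * norm u0 - 17 * \<rho> \<le> 8 * norm (u0 + z)" using f2 by simp
    have "norm u0 + \<rho> \<le> 16 * norm (u0 + z)" using a b rho by linarith
    then show ?thesis by simp
  qed
  have uz: "u + z = y - \<xi>" unfolding u z_def by simp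
  define d' where "d' = fy - A *v y - b"
  have yxz: "y = x + z" unfolding z_def by simp
  have q: "x - fy = u0 - A *v z - d'"
    unfolding u0 d'_def yxz by (simp add: matrix_vector_right_distrib algebra_simps)
  have M3: "M \<ge> 3" "M \<ge> 1" unfolding M_def using nA(2) by auto
  have Az: "norm (A *v z) \<le> nA * (3 * \<rho>)"
    using nA(1)[of z] zb nA(2) by (smt (verit) mult_left_mono)
  have dd: "norm d' \<le> \<rho>" using d unfolding d'_def .
  have Mu: "norm u0 \<le> M * norm u0" using M3 by (simp add: mult_le_cancel_right1)
  have M1: "norm (u0 + z) \<le> M * (norm u0 + \<rho>)"
  proof -
    have "norm (u0 + z) \<le> norm u0 + 3 * \<rho>" using norm_triangle_ineq[of u0 z] zb by linarith
    also have "\<dots> \<le> M * norm u0 + M * \<rho>"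
    proof -
      have "3 * \<rho> \<le> M * \<rho>" using M3 rho by (intro mult_right_mono) auto
      then show ?thesis using Mu by linarith
    qed
    finally show ?thesis by (simp add: algebra_simps)
  qed
  have M2: "norm (x - fy) \<le> M * (norm u0 + \<rho>)"
  proof -
    have "norm (u0 - A *v z - d') \<le> norm u0 + norm (A *v z) + norm d'"
      by (smt (verit) norm_triangle_ineq4)
    also have "\<dots> \<le> norm u0 + (3 * nA + 1) * \<rho>" using Az dd by (simp add: algebra_simps)
    also have "\<dots> \<le> M * norm u0 + M * \<rho>"
      using Mu rho unfolding M_def by (simp add: algebra_simps)
    finally show ?thesis unfolding q by (simp add: algebra_simps)
  qed
  have M4: "norm (u0 + z - (x - fy)) \<le> M * \<rho>"
  proof -
    have "u0 + z - (x - fy) = z + A *v z + d'" unfolding q by simp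
    then have "norm (u0 + z - (x - fy)) \<le> norm z + norm (A *v z) + norm d'"
      by (metis norm_triangle_le norm_triangle_ineq add_mono order_refl)
    also have "\<dots> \<le> M * \<rho>" using zb Az dd unfolding M_def by (simp add: algebra_simps)
    finally show ?thesis .
  qed
  have ineq': "0 \<le> (Dh (u + z) - Dh (x - fy)) \<bullet> z"
    unfolding uz using ineq by (simp add: z_def)
  show ?thesis
    using key[OF C2 E rho k12(1) wC zw zb farz ineq' M3(1) M1 M2 M4] unfolding M_def .
qed

end

theorem corollary4p2:
  fixes p lam Lam \<epsilon> :: real
    and h :: "real^'n \<Rightarrow> real"
    and Dh :: "real^'n \<Rightarrow> real^'n"
    and D2h :: "real^'n \<Rightarrow> real^'n^'n"
    and T :: "real^'n \<Rightarrow> (real^'n) set"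
    and f :: "real^'n \<Rightarrow> real^'n"
    and x0 b :: "real^'n"
    and A :: "real^'n^'n"
  assumes p: "p \<ge> 2"
    and h_grad: "\<And>x. (h has_derivative (\<lambda>v. Dh x \<bullet> v)) (at x)"
    and h_hess: "\<And>x. (Dh has_derivative (\<lambda>v. D2h x *v v)) (at x)"
    and h_C2: "continuous_on UNIV D2h"
    and h_nonneg: "\<And>x. h x \<ge> 0"
    and h_hom: "\<And>t x. t > 0 \<Longrightarrow> h (t *\<^sub>R x) = t powr p * h x"
    and ellipt: "0 < lam" "lam \<le> Lam"
    and hess_bounds: "\<And>x v. norm x = 1 \<Longrightarrow>
        lam * (norm v)\<^sup>2 \<le> (D2h x *v v) \<bullet> v \<and> (D2h x *v v) \<bullet> v \<le> Lam * (norm v)\<^sup>2"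
    and T_mono: "h_monotone h T"
    and f_ae: "AE x in lebesgue. T x = {f x}"
    and eps: "\<epsilon> > 0"
    and f_meas: "f \<in> borel_measurable (lebesgue_on (ball x0 \<epsilon>))"
    and f_Lp: "integrable (lebesgue_on (ball x0 \<epsilon>)) (\<lambda>x. norm (f x) powr (p - 1))"
    and t1: "(\<lambda>R. ((LINT x:ball x0 R|lebesgue. norm (f x - A *v x - b) powr (p - 1))
                    / measure lebesgue (ball x0 R)) powr (1 / (p - 1)))
             \<in> o[at_right 0](\<lambda>R. R)"
  shows "mv_differentiable_at T x0"
proof -
  interpret hs: hsetup p lam h Dh D2h
    by unfold_locales (use p h_grad h_hess h_C2 h_hom ellipt hess_bounds in auto)
  obtain C2 where C2: "C2 > 0"
    "\<And>v E R. norm v \<le> R \<Longrightarrow> 0 < R \<Longrightarrow> norm (D2h v *v E) \<le> C2 * R powr (p-2) * norm E"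
    using hs.D2h_bound by blast
  define nA where "nA = real CARD('n) * real CARD('n) * norm A"
  have nA: "\<And>z. norm (A *v z) \<le> nA * norm z" "nA \<ge> 0"
    unfolding nA_def by (auto intro: mat_vec_norm_le)
  define \<kappa> where "\<kappa> = min (1/8) (lam / (2*C2))"
  have ka: "\<kappa> > 0" "\<kappa> \<le> 1/8" "C2 * \<kappa> \<le> lam/2"
  proof -
    show "\<kappa> > 0" unfolding \<kappa>_def using C2 ellipt by simp
    show "\<kappa> \<le> 1/8" unfolding \<kappa>_def by simp
    have "C2 * \<kappa> \<le> C2 * (lam / (2*C2))" unfolding \<kappa>_def using C2 by (intro mult_left_mono) auto
    then show "C2 * \<kappa> \<le> lam/2" using C2 by simp
  qed
  define Ck where "Ck = 24 * C2 * (4 + 3*nA) * (128 * (4 + 3*nA)) powr (p-2) / lam"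
  have Ck: "Ck > 0" unfolding Ck_def using C2 nA(2) ellipt by simp
  define G where "G = (\<lambda>x. norm (f x - A *v x - b) powr (p-1))"
  define Fn where "Fn = (\<lambda>R. ((LINT x:ball x0 R|lebesgue. G x) / measure lebesgue (ball x0 R)) powr (1 / (p - 1)))"
  have t1': "Fn \<in> o[at_right 0](\<lambda>R. R)" using t1 unfolding Fn_def G_def .
  define n where "n = CARD('n)"
  define U where "U = measure lebesgue (ball (0::real^'n) 1)"
  have U: "U > 0" unfolding U_def by (rule unit_ball_pos)
  have mball: "measure lebesgue (ball c r) = r ^ n * U" if "r \<ge> 0" for c :: "real^'n" and r
    unfolding n_def U_def by (rule measure_ball_eq[OF that])
  have main: "\<forall>e>0. \<exists>\<delta>>0. \<forall>x \<xi>. dist x x0 < \<delta> \<longrightarrow> \<xi> \<in> T x \<longrightarrow> norm (\<xi> - (A *v x + b)) \<le> e * dist x x0"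
  proof (intro allI impI)
    fix e :: real assume e: "e > 0"
    define \<eta> where "\<eta> = min (1/8) (e / Ck)"
    have eta: "\<eta> > 0" "\<eta> \<le> 1/8" "Ck * \<eta> \<le> e"
    proof -
      show "\<eta> > 0" unfolding \<eta>_def using e Ck by simp
      show "\<eta> \<le> 1/8" unfolding \<eta>_def by (rule min.cobounded1)
      have "Ck * \<eta> \<le> Ck * (e / Ck)" unfolding \<eta>_def using Ck by (intro mult_left_mono) auto
      then show "Ck * \<eta> \<le> e" using Ck by simp
    qed
    define c0 where "c0 = \<eta>/2 * (\<kappa>^n * \<eta>^n / 2^(n+1)) powr (1/(p-1))"
    have c0: "c0 > 0" unfolding c0_def using eta ka by simp
    have "eventually (\<lambda>R. norm (Fn R) \<le> c0 * norm R) (at_right 0)"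
      using landau_o.smallD[OF t1' c0] .
    then obtain \<delta>1 where \<delta>1: "\<delta>1 > 0" "\<And>R. 0 < R \<Longrightarrow> R < \<delta>1 \<Longrightarrow> norm (Fn R) \<le> c0 * norm R"
      unfolding eventually_at_right_field by auto
    define \<delta> where "\<delta> = min (\<delta>1/2) (\<epsilon>/2)"
    have \<delta>: "\<delta> > 0" unfolding \<delta>_def using \<delta>1 eps by simp
    have claim: "norm (\<xi> - (A *v x + b)) \<le> e * s"
      if s: "0 < s" "s < \<delta>" and xs: "norm (x - x0) \<le> s" and xi: "\<xi> \<in> T x" for x \<xi> s
    proof -
      define u where "u = x - \<xi>"
      define u0 where "u0 = x - (A *v x + b)"
      have nrm: "norm (\<xi> - (A *v x + b)) = norm (u - u0)"
        unfolding u_def u0_def by (simp add: norm_minus_commute algebra_simps)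
      show ?thesis
      proof (cases "u = u0")
        case True
        then show ?thesis using nrm e s by simp
      next
        case False
        have nE: "norm (u - u0) > 0" using False by simp
        define \<rho> where "\<rho> = \<eta> * s"
        have rho: "\<rho> > 0" unfolding \<rho>_def using eta s by simp
        have rho8: "\<rho> \<le> s/8" unfolding \<rho>_def using eta s by (simp add: mult_right_mono)
        define V1 where "V1 = (1 * \<rho> / norm (u - u0)) *\<^sub>R (u - u0)"
        have nV1: "norm V1 = \<rho>" unfolding V1_def using nE rho by simp
        define k :: real where "k = (if \<rho>/2 \<le> norm (u0 - V1) then 1 else 2)"
        have k: "k = 1 \<or> k = 2" unfolding k_def by simp
        have far: "\<rho>/2 \<le> norm (u0 - (k * \<rho> / norm (u - u0)) *\<^sub>R (u - u0))"
        proof (cases "\<rho>/2 \<le> norm (u0 - V1)")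
          case True
          then show ?thesis unfolding k_def V1_def by simp
        next
          case False
          have eq: "u0 - (2 * \<rho> / norm (u - u0)) *\<^sub>R (u - u0) = (u0 - V1) - V1"
          proof -
            have "2 * \<rho> / norm (u - u0) = 1 * \<rho> / norm (u - u0) + 1 * \<rho> / norm (u - u0)" by simp
            then have "(2 * \<rho> / norm (u - u0)) *\<^sub>R (u - u0) = V1 + V1"
              unfolding V1_def by (metis scaleR_add_left)
            then show ?thesis by (simp add: algebra_simps)
          qed
          have "norm V1 - norm (u0 - V1) \<le> norm ((u0 - V1) - V1)"
          proof -
            have "norm ((u0 - V1) - ((u0 - V1) - V1)) \<le> norm (u0 - V1) + norm ((u0 - V1) - V1)"
              by (rule norm_triangle_ineq4)
            moreover have "(u0 - V1) - ((u0 - V1) - V1) = V1" by simp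
            ultimately show ?thesis by simp
          qed
          then show ?thesis using False nV1 unfolding k_def eq[symmetric] by simp
        qed
        define cen where "cen = x - (k * \<rho> / norm (u - u0)) *\<^sub>R (u - u0)"
        have ncen: "norm (cen - x) \<le> 2 * \<rho>"
          unfolding cen_def using nE rho k by auto
        have sub: "ball cen (\<kappa> * \<rho>) \<subseteq> ball x0 (2 * s)"
        proof
          fix y assume "y \<in> ball cen (\<kappa> * \<rho>)"
          then have "dist y cen < \<kappa> * \<rho>" by (simp add: dist_commute)
          moreover have "\<kappa> * \<rho> \<le> \<rho>/8" using ka rho by (simp add: mult_right_mono)
          moreover have "dist y x0 \<le> dist y cen + norm (cen - x) + norm (x - x0)"
            using dist_triangle[of y x0 cen] dist_triangle[of cen x0 x]
            by (simp add: dist_norm)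
          ultimately have "dist y x0 < 2 * s" using ncen xs rho8 s by linarith
          then show "y \<in> ball x0 (2 * s)" by (simp add: dist_commute)
        qed
        have s2: "2 * s \<le> \<epsilon>" "2 * s < \<delta>1" using s unfolding \<delta>_def by auto
        have int: "set_integrable lebesgue (ball x0 (2 * s)) G"
          unfolding G_def using p s2 by (intro G_set_integrable[OF f_meas f_Lp]) auto
        have Gnn: "\<And>x. G x \<ge> 0" unfolding G_def by simp
        define I where "I = (LINT x:ball x0 (2 * s)|lebesgue. G x)"
        have I0: "I \<ge> 0" unfolding I_def set_lebesgue_integral_def
          using Gnn by (intro Bochner_Integration.integral_nonneg) (simp add: indicator_def)
        have Fb: "Fn (2 * s) \<le> c0 * (2 * s)"
          using \<delta>1(2)[of "2 * s"] s s2 by simp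
        have Fn2: "Fn (2 * s) = (I / ((2 * s) ^ n * U)) powr (1/(p-1))"
        proof -
          have mb: "measure lebesgue (ball x0 (2 * s)) = (2 * s) ^ n * U" using s by (intro mball) simp
          show ?thesis unfolding Fn_def I_def mb ..
        qed
        have lt0: "I < (\<eta> * s) powr (p-1) * ((\<kappa> * (\<eta> * s)) ^ n * U)"
          by (rule lt_lemma[OF p eta(1) ka(1) s(1) U I0 _ c0_def]) (use Fb Fn2 in simp)
        have lt: "(LINT x:ball x0 (2 * s)|lebesgue. G x) < \<rho> powr (p-1) * measure lebesgue (ball cen (\<kappa> * \<rho>))"
        proof -
          have mb: "measure lebesgue (ball cen (\<kappa> * \<rho>)) = (\<kappa> * \<rho>) ^ n * U" using ka rho by (intro mball) simp
          show ?thesis using lt0 unfolding mb I_def by (simp add: \<rho>_def)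
        qed
        obtain y where y: "y \<in> ball cen (\<kappa> * \<rho>)" "T y = {f y}" "G y \<le> \<rho> powr (p-1)"
          using exists_good[OF int Gnn sub f_ae lt] by blast
        have dy: "norm (f y - A *v y - b) \<le> \<rho>"
        proof (rule ccontr)
          assume "\<not> ?thesis"
          then have "\<rho> powr (p-1) < norm (f y - A *v y - b) powr (p-1)"
            using p rho by (intro powr_less_mono2) auto
          then show False using y(3) unfolding G_def by simp
        qed
        have fy: "f y \<in> T y" using y(2) by simp
        have ineq: "0 \<le> (Dh (y - \<xi>) - Dh (x - f y)) \<bullet> (y - x)"
          by (rule mono_ineq[OF T_mono hs.h_convex_ineq xi fy])
        have "norm (u - u0) \<le> Ck * \<rho>"
          unfolding Ck_def
          by (rule hs.step[OF C2 nA ka rho u_def u0_def False k cen_def far y(1) ineq dy])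
        also have "\<dots> = (Ck * \<eta>) * s" unfolding \<rho>_def by simp
        also have "\<dots> \<le> e * s" using eta s by (intro mult_right_mono) auto
        finally show ?thesis using nrm by simp
      qed
    qed
    show "\<exists>\<delta>>0. \<forall>x \<xi>. dist x x0 < \<delta> \<longrightarrow> \<xi> \<in> T x \<longrightarrow> norm (\<xi> - (A *v x + b)) \<le> e * dist x x0"
    proof (intro exI[of _ \<delta>] conjI allI impI)
      show "\<delta> > 0" by (rule \<delta>)
      fix x \<xi> assume dx: "dist x x0 < \<delta>" and xi: "\<xi> \<in> T x"
      show "norm (\<xi> - (A *v x + b)) \<le> e * dist x x0"
      proof (cases "x = x0")
        case False
        then have "dist x x0 > 0" by simp
        then show ?thesis using claim[of "dist x x0" x \<xi>] dx xi by (simp add: dist_norm)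
      next
        case True
        show ?thesis
        proof (rule ccontr)
          assume "\<not> ?thesis"
          then have N: "norm (\<xi> - (A *v x + b)) > 0" using True by simp
          define s where "s = min (\<delta>/2) (norm (\<xi> - (A *v x + b)) / (2*e))"
          have s0: "s > 0" "s < \<delta>" unfolding s_def using \<delta> N e by auto
          have "norm (\<xi> - (A *v x + b)) \<le> e * s"
            using claim[OF s0 _ xi] True s0 by simp
          also have "\<dots> \<le> e * (norm (\<xi> - (A *v x + b)) / (2*e))"
            unfolding s_def using e by (intro mult_left_mono) auto
          also have "\<dots> = norm (\<xi> - (A *v x + b)) / 2" using e by simp
          finally show False using N by simp
        qed
      qed
    qed
  qed
  show ?thesis unfolding mv_differentiable_at_def using main by blast
qed

end
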